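(* Let $X_1, X_2, \ldots$ be independent random variables, each uniformly distributed on $[-1,1]$, and fix $\varepsilon > 0$. For $t \ge 0$ and $z \in \mathbb{R}$, let $f_t(z) = 1$ if there exists $S \subseteq \{1,\dots,t\}$ with $\lvert z - \sum_{i \in S} X_i \rvert < \varepsilon$, and $f_t(z) = 0$ otherwise; let $v_t = \frac{1}{2}\int_{-1}^{1} f_t(z)\,\mathrm{d}z$, and let $\tau_1 = \min\{t \ge 0 : v_t > 1/2\}$. Given $\beta \in (0, 1/8)$, let $p_\beta = 1 - \frac{7}{8(1-\beta)}$. Then for all integers $0 \le t < \tau_1$, $$\Pr\left[v_{t+1} \ge v_t(1+\beta) \,\middle|\, X_1,\dots,X_t,\ t < \tau_1\right] \ge p_\beta.$$
   Context: $f_t$ is the indicator that $z$ can be approximated to within error strictly less than $\varepsilon$ by a subset sum of the first $t$ variables (the empty sum being $0$); $v_t$ is the fraction of $[-1,1]$ so approximated; $\tau_1$ is the first time this fraction exceeds $1/2$. *)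

theory Defs
  imports "HOL-Probability.Probability"
begin

text \<open>A realisation of the variables is a sequence x :: nat => real; x i is the
  value of X_i (indices start at 1).\<close>

definition approx_ind :: "real \<Rightarrow> nat \<Rightarrow> (nat \<Rightarrow> real) \<Rightarrow> real \<Rightarrow> real" where
  "approx_ind eps t x z =
     (if \<exists>S. S \<subseteq> {1..t} \<and> \<bar>z - (\<Sum>i\<in>S. x i)\<bar> < eps then 1 else 0)"

definition vfrac :: "real \<Rightarrow> nat \<Rightarrow> (nat \<Rightarrow> real) \<Rightarrow> real" where
  "vfrac eps t x = (1/2) * (\<integral>z\<in>{-1..1}. approx_ind eps t x z \<partial>lborel)"

definition tau1 :: "real \<Rightarrow> (nat \<Rightarrow> real) \<Rightarrow> enat" where
  "tau1 eps x = (if \<exists>t. vfrac eps t x > 1/2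
                 then enat (LEAST t. vfrac eps t x > 1/2) else \<infinity>)"

definition p_beta :: "real \<Rightarrow> real" where
  "p_beta \<beta> = 1 - 7 / (8 * (1 - \<beta>))"

end

theory Submission
  imports Defs
begin

lemma ennreal_sub_le: "ennreal a \<le> e + ennreal b \<Longrightarrow> 0 \<le> b \<Longrightarrow> ennreal (a - b) \<le> e"
  by (metis ennreal_less_top ennreal_minus less_diff_eq_ennreal verit_comp_simplify(3))

lemma translate_emeasure:
  fixes S :: "real set" assumes "S \<in> sets borel"
  shows "emeasure lborel {w. c + w \<in> S} = emeasure lborel S"
proof -
  have "emeasure lborel S = emeasure (distr lborel borel ((+) c)) S" by (simp add: lborel_distr_plus)
  also have "\<dots> = emeasure lborel ((+) c -` S \<inter> space lborel)"
    using assms by (subst emeasure_distr) auto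
  finally show ?thesis by (simp add: vimage_def)
qed

lemma fin_I:
  fixes S :: "real set" shows "emeasure lborel (S \<inter> {-1..1}) < \<infinity>"
  by (rule le_less_trans[OF emeasure_mono[of "S \<inter> {-1..1}" "{-1..1}"]]) auto

lemma fiber_lower:
  fixes A :: "real set" assumes A[measurable]: "A \<in> sets borel" and w: "w \<in> A \<inter> {-1..1}"
  shows "ennreal (2 - \<bar>w\<bar> - measure lborel (A \<inter> {-1..1}))
     \<le> emeasure lborel {y. y \<in> {-1..1} \<and> w + y \<in> {-1..1} \<and> w + y \<notin> A}"
proof -
  define X where "X = {y::real. y \<in> {-1..1} \<and> w + y \<in> {-1..1}}"
  define Y where "Y = {y::real. w + y \<in> A \<inter> {-1..1}}"
  define T where "T = {y. y \<in> {-1..1} \<and> w + y \<in> {-1..1} \<and> w + y \<notin> A}"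
  have X: "X = {max (-1) (-1-w) .. min 1 (1-w)}" unfolding X_def by auto
  have eX: "emeasure lborel X = ennreal (2 - \<bar>w\<bar>)"
    unfolding X using w by (subst emeasure_lborel_Icc) (auto simp: abs_if)
  have eY: "emeasure lborel Y = ennreal (measure lborel (A \<inter> {-1..1}))"
    unfolding Y_def using fin_I[of A] by (subst translate_emeasure) (auto simp: emeasure_eq_ennreal_measure)
  have T[measurable]: "T \<in> sets borel" unfolding T_def by measurable
  have Ym[measurable]: "Y \<in> sets borel" unfolding Y_def by measurable
  have "X \<subseteq> T \<union> Y" unfolding X_def T_def Y_def by auto
  then have "emeasure lborel X \<le> emeasure lborel (T \<union> Y)" by (intro emeasure_mono) auto
  also have "\<dots> \<le> emeasure lborel T + emeasure lborel Y" by (intro emeasure_subadditive) auto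
  finally have "ennreal (2 - \<bar>w\<bar>) \<le> emeasure lborel T + ennreal (measure lborel (A \<inter> {-1..1}))"
    unfolding eX eY .
  then show ?thesis unfolding T_def by (rule ennreal_sub_le) simp
qed

lemma bathtub:
  fixes B :: "real set" assumes B[measurable]: "B \<in> sets borel" and BI: "B \<subseteq> {-1..1}"
    and M: "M = measure lborel B" and M1: "M \<le> 1"
  shows "ennreal (M/4) \<le> (\<integral>\<^sup>+w. ennreal (2 - \<bar>w\<bar> - M) * indicator B w \<partial>lborel)"
proof -
  define c where "c = 1 - M/2"
  have M0: "0 \<le> M" using M by simp
  have "B \<inter> {-1..1} = B" using BI by auto
  then have "emeasure lborel B \<noteq> \<infinity>" using fin_I[of B] by simp
  then have eB: "emeasure lborel B = ennreal M"
    using M by (simp add: emeasure_eq_ennreal_measure)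
  define h where "h w = max 0 (\<bar>w\<bar> - c)" for w :: real
  have pw: "ennreal (1 - M/2) * indicator B w \<le>
      ennreal (2 - \<bar>w\<bar> - M) * indicator B w + ennreal (h w) * indicator {-1..1} w" for w
  proof (cases "w \<in> B")
    case True
    have w1: "\<bar>w\<bar> \<le> 1" using subsetD[OF BI True] by (simp add: abs_le_iff)
    have "ennreal (1 - M/2) \<le> ennreal (2 - \<bar>w\<bar> - M + h w)"
      by (intro ennreal_leI) (auto simp: h_def c_def)
    also have "\<dots> = ennreal (2 - \<bar>w\<bar> - M) + ennreal (h w)"
      using w1 M1 by (intro ennreal_plus) (auto simp: h_def)
    finally show ?thesis using True BI by (auto simp: indicator_def)
  qed auto
  have hI: "ennreal (h w) * indicator {-1..1} w \<le>
     ennreal (w - c) * indicator {c..1} w + ennreal (- w - c) * indicator {-1..-c} w" for w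
    using M0 M1 by (auto simp: h_def c_def indicator_def abs_if max_def)
  have c1: "c \<le> 1" "0 \<le> c" using M0 M1 by (auto simp: c_def)
  have d1: "((\<lambda>w. (w-c)^2/2) has_real_derivative (x - c)) (at x)" for x
    by (auto intro!: derivative_eq_intros simp: power2_eq_square field_simps)
  have d2: "((\<lambda>w. - ((w+c)^2/2)) has_real_derivative (- x - c)) (at x)" for x
    by (auto intro!: derivative_eq_intros simp: power2_eq_square field_simps)
  have "(\<integral>\<^sup>+w. ennreal (w - c) * indicator {c..1} w \<partial>lborel) = ennreal ((1-c)^2/2 - (c-c)^2/2)"
    by (rule nn_integral_FTC_Icc[OF _ d1]) (use c1 in auto)
  then have int1: "(\<integral>\<^sup>+w. ennreal (w - c) * indicator {c..1} w \<partial>lborel) = ennreal ((1-c)^2/2)"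
    by simp
  have "(\<integral>\<^sup>+w. ennreal (- w - c) * indicator {-1..-c} w \<partial>lborel) = ennreal (- ((-c+c)^2/2) - (- ((-1+c)^2/2)))"
    by (rule nn_integral_FTC_Icc[OF _ d2]) (use c1 in auto)
  then have int2: "(\<integral>\<^sup>+w. ennreal (- w - c) * indicator {-1..-c} w \<partial>lborel) = ennreal ((1-c)^2/2)"
    by (simp add: power2_eq_square algebra_simps)
  have "ennreal ((1 - M/2) * M) = (\<integral>\<^sup>+w. ennreal (1 - M/2) * indicator B w \<partial>lborel)"
    using eB M0 M1 by (simp add: nn_integral_cmult_indicator ennreal_mult)
  also have "\<dots> \<le> (\<integral>\<^sup>+w. ennreal (2 - \<bar>w\<bar> - M) * indicator B w + ennreal (h w) * indicator {-1..1} w \<partial>lborel)"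
    by (intro nn_integral_mono pw)
  also have "\<dots> = (\<integral>\<^sup>+w. ennreal (2 - \<bar>w\<bar> - M) * indicator B w \<partial>lborel) + (\<integral>\<^sup>+w. ennreal (h w) * indicator {-1..1} w \<partial>lborel)"
    by (intro nn_integral_add) (auto simp: h_def)
  also have "(\<integral>\<^sup>+w. ennreal (h w) * indicator {-1..1} w \<partial>lborel) \<le>
     (\<integral>\<^sup>+w. ennreal (w - c) * indicator {c..1} w + ennreal (- w - c) * indicator {-1..-c} w \<partial>lborel)"
    by (intro nn_integral_mono hI)
  also have "\<dots> = ennreal ((1-c)^2/2) + ennreal ((1-c)^2/2)"
    by (subst nn_integral_add) (auto simp: int1 int2)
  also have "\<dots> = ennreal (M^2/4)"
    by (subst ennreal_plus[symmetric]) (auto simp: c_def power2_eq_square)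
  finally have "ennreal ((1 - M/2) * M - M^2/4) \<le> (\<integral>\<^sup>+w. ennreal (2 - \<bar>w\<bar> - M) * indicator B w \<partial>lborel)"
    by (intro ennreal_sub_le) (auto simp: add_mono)
  moreover have "M/4 \<le> (1 - M/2) * M - M^2/4"
  proof -
    have "0 \<le> M * (1 - M)" using M0 M1 by simp
    then show ?thesis by (simp add: algebra_simps power2_eq_square)
  qed
  ultimately show ?thesis using ennreal_leI order_trans by blast
qed

lemma W_meas:
  fixes A :: "real set" assumes [measurable]: "A \<in> sets borel"
  shows "{(y,w). y \<in> {-1..1} \<and> w \<in> A \<inter> {-1..1} \<and> w + y \<in> {-1..1} \<and> w + y \<notin> A} \<in> sets (lborel \<Otimes>\<^sub>M lborel)"
proof -
  have "{p \<in> space (lborel \<Otimes>\<^sub>M lborel). fst p \<in> {-1..1::real} \<and> snd p \<in> A \<inter> {-1..1} \<and> snd p + fst p \<in> {-1..1} \<and> snd p + fst p \<notin> A} \<in> sets (lborel \<Otimes>\<^sub>M lborel)"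
    by measurable
  moreover have "{p \<in> space (lborel \<Otimes>\<^sub>M lborel). fst p \<in> {-1..1::real} \<and> snd p \<in> A \<inter> {-1..1} \<and> snd p + fst p \<in> {-1..1} \<and> snd p + fst p \<notin> A}
     = {(y,w). y \<in> {-1..1} \<and> w \<in> A \<inter> {-1..1} \<and> w + y \<in> {-1..1} \<and> w + y \<notin> A}"
    by (simp add: space_pair_measure set_eq_iff split_beta)
  ultimately show ?thesis by metis
qed

lemma mm[measurable]: "(\<lambda>p. snd p - fst p) \<in> borel_measurable (lborel \<Otimes>\<^sub>M (lborel::real measure))"
  by measurable

lemma V_meas:
  fixes A :: "real set" assumes [measurable]: "A \<in> sets borel"
  shows "{(y,z). (z \<in> A \<or> z - y \<in> A) \<and> z \<in> {-1..1}} \<in> sets (lborel \<Otimes>\<^sub>M lborel)"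
proof -
  have "{p \<in> space (lborel \<Otimes>\<^sub>M lborel). (snd p \<in> A \<or> snd p - fst p \<in> A) \<and> snd p \<in> {-1..1::real}} \<in> sets (lborel \<Otimes>\<^sub>M lborel)"
    by measurable
  moreover have "{p \<in> space (lborel \<Otimes>\<^sub>M lborel). (snd p \<in> A \<or> snd p - fst p \<in> A) \<and> snd p \<in> {-1..1::real}}
     = {(y,z). (z \<in> A \<or> z - y \<in> A) \<and> z \<in> {-1..1}}"
    unfolding space_pair_measure by (intro set_eqI) (clarsimp simp only: mem_Collect_eq case_prod_beta space_lborel space_borel UNIV_Times_UNIV UNIV_I simp_thms)
  ultimately show ?thesis by metis
qed


lemma F_meas:
  fixes A :: "real set" assumes A[measurable]: "A \<in> sets borel"
  shows "{y. c \<le> measure lborel ({z. z \<in> A \<or> z - y \<in> A} \<inter> {-1..1})} \<in> sets borel"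
proof -
  define V where "V = {(y,z). (z \<in> A \<or> z - y \<in> A) \<and> z \<in> {-1..1::real}}"
  have Vm: "V \<in> sets (lborel \<Otimes>\<^sub>M lborel)" unfolding V_def by (rule V_meas[OF A])
  have fib: "Pair y -` V = {z. z \<in> A \<or> z - y \<in> A} \<inter> {-1..1}" for y unfolding V_def by auto
  have "(\<lambda>y. emeasure lborel (Pair y -` V)) \<in> borel_measurable lborel"
    by (rule lborel.measurable_emeasure_Pair[OF Vm])
  then have m[measurable]: "(\<lambda>y. enn2real (emeasure lborel (Pair y -` V))) \<in> borel_measurable borel"
    by simp
  have "{y \<in> space borel. c \<le> enn2real (emeasure lborel (Pair y -` V))} \<in> sets borel"
    by measurable
  moreover have "{y \<in> space borel. c \<le> enn2real (emeasure lborel (Pair y -` V))}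
      = {y. c \<le> measure lborel ({z. z \<in> A \<or> z - y \<in> A} \<inter> {-1..1})}"
    unfolding fib measure_def space_borel by blast
  ultimately show ?thesis by metis
qed

lemma key:
  fixes A :: "real set" and \<beta> :: real
  assumes A[measurable]: "A \<in> sets borel" and M1: "measure lborel (A \<inter> {-1..1}) \<le> 1"
    and \<beta>: "0 < \<beta>" "\<beta> < 1/8"
  shows "p_beta \<beta> \<le> measure lborel ({-1..1} \<inter> {y. measure lborel (A \<inter> {-1..1}) * (1+\<beta>)
            \<le> measure lborel ({z. z \<in> A \<or> z - y \<in> A} \<inter> {-1..1})}) / 2"
proof -
  define I where "I = {-1..1::real}"
  define B where "B = A \<inter> I"
  define M where "M = measure lborel B"
  define F where "F y = measure lborel ({z. z \<in> A \<or> z - y \<in> A} \<inter> I)" for y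
  define E where "E = {y. M * (1+\<beta>) \<le> F y}"
  have Em[measurable]: "E \<in> sets borel" unfolding E_def F_def I_def by (rule F_meas[OF A])
  have Bm[measurable]: "B \<in> sets borel" unfolding B_def I_def by measurable
  have M0: "0 \<le> M" unfolding M_def by simp
  have M1': "M \<le> 1" using M1 unfolding M_def B_def I_def .
  have eB: "emeasure lborel B = ennreal M"
    using fin_I[of A] unfolding M_def B_def I_def by (simp add: emeasure_eq_ennreal_measure)
  have IE_fin: "I \<inter> E \<in> fmeasurable lborel"
    using fin_I[of E] unfolding I_def by (intro fmeasurableI) (auto simp: Int_commute)
  have mI: "measure lborel I = 2" unfolding I_def by simp
  have pb1: "p_beta \<beta> \<le> 1"
    using \<beta> unfolding p_beta_def by (simp add: field_simps)
  show ?thesis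
  proof (cases "M = 0")
    case True
    then have "E = UNIV" unfolding E_def F_def by auto
    then show ?thesis using pb1 unfolding E_def M_def B_def I_def F_def by simp
  next
    case False
    then have Mpos: "M > 0" using M0 by simp
    define W where "W = {(y,w). y \<in> {-1..1} \<and> w \<in> A \<inter> {-1..1} \<and> w + y \<in> {-1..1::real} \<and> w + y \<notin> A}"
    have Wm: "W \<in> sets (lborel \<Otimes>\<^sub>M lborel)" unfolding W_def by (rule W_meas[OF A])
    define G where "G y = emeasure lborel (Pair y -` W)" for y
    have Gm[measurable]: "G \<in> borel_measurable borel"
      using lborel.measurable_emeasure_Pair[OF Wm] unfolding G_def by simp
    have "(\<integral>\<^sup>+w. ennreal (2 - \<bar>w\<bar> - M) * indicator B w \<partial>lborel)
        \<le> (\<integral>\<^sup>+w. emeasure lborel ((\<lambda>y. (y, w)) -` W) \<partial>lborel)"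
    proof (intro nn_integral_mono)
      fix w
      show "ennreal (2 - \<bar>w\<bar> - M) * indicator B w \<le> emeasure lborel ((\<lambda>y. (y, w)) -` W)"
      proof (cases "w \<in> B")
        case True
        then have "(\<lambda>y. (y, w)) -` W = {y. y \<in> {-1..1} \<and> w + y \<in> {-1..1} \<and> w + y \<notin> A}"
          unfolding W_def B_def I_def by auto
        then show ?thesis using fiber_lower[OF A, of w] True
          unfolding M_def B_def I_def by simp
      qed simp
    qed
    also have "\<dots> = emeasure (lborel \<Otimes>\<^sub>M lborel) W"
      by (rule lborel_pair.emeasure_pair_measure_alt2[OF Wm, symmetric])
    also have "\<dots> = (\<integral>\<^sup>+y. G y \<partial>lborel)"
      unfolding G_def by (rule lborel.emeasure_pair_measure_alt[OF Wm])
    finally have low0: "(\<integral>\<^sup>+w. ennreal (2 - \<bar>w\<bar> - M) * indicator B w \<partial>lborel) \<le> (\<integral>\<^sup>+y. G y \<partial>lborel)" .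
    have low: "ennreal (M/4) \<le> (\<integral>\<^sup>+y. G y \<partial>lborel)"
      using bathtub[OF Bm _ M_def M1'] low0 unfolding B_def I_def by (auto intro: order_trans)
    define E' where "E' = {y \<in> I. ennreal (\<beta> * M) \<le> G y}"
    have E'm[measurable]: "E' \<in> sets borel" unfolding E'_def I_def by measurable
    have E'I: "E' \<subseteq> I" unfolding E'_def by auto
    have Gbound: "G y \<le> ennreal M * indicator E' y + ennreal (\<beta> * M) * indicator (I - E') y" for y
    proof (cases "y \<in> I")
      case False
      then have "Pair y -` W = {}" unfolding W_def I_def by auto
      then show ?thesis unfolding G_def by simp
    next
      case True
      have "Pair y -` W \<subseteq> B" unfolding W_def B_def I_def by auto
      then have GB: "G y \<le> ennreal M" unfolding G_def using eB by (metis emeasure_mono Bm sets_lborel)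
      show ?thesis
      proof (cases "y \<in> E'")
        case True then show ?thesis using GB by simp
      next
        case False
        then have "G y < ennreal (\<beta> * M)" using \<open>y \<in> I\<close> unfolding E'_def by auto
        then show ?thesis using False \<open>y \<in> I\<close> by simp
      qed
    qed
    define m' where "m' = measure lborel E'"
    have eE': "emeasure lborel E' = ennreal m'"
      using fin_I[of E'] E'I unfolding m'_def I_def by (simp add: emeasure_eq_ennreal_measure Int_absorb2)
    have m'2: "m' \<le> 2"
    proof -
      have "emeasure lborel E' \<le> emeasure lborel I" using E'I by (intro emeasure_mono) (auto simp: I_def)
      then have "ennreal m' \<le> ennreal 2" using eE' unfolding I_def by simp
      then show ?thesis using ennreal_le_iff[of 2 m'] by simp
    qed
    have eIE': "emeasure lborel (I - E') = ennreal (2 - m')"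
    proof -
      have "emeasure lborel (I - E') = emeasure lborel I - emeasure lborel E'"
        using E'I eE' by (intro emeasure_Diff) (auto simp: I_def)
      moreover have "(2::ennreal) - ennreal m' = ennreal (2 - m')"
        using ennreal_minus[of m' 2] by (simp add: m'_def)
      ultimately show ?thesis using eE' unfolding I_def by simp
    qed
    have "(\<integral>\<^sup>+y. G y \<partial>lborel) \<le> (\<integral>\<^sup>+y. ennreal M * indicator E' y + ennreal (\<beta> * M) * indicator (I - E') y \<partial>lborel)"
      by (intro nn_integral_mono Gbound)
    also have "\<dots> = ennreal M * emeasure lborel E' + ennreal (\<beta> * M) * emeasure lborel (I - E')"
      by (subst nn_integral_add) (auto simp: I_def nn_integral_cmult_indicator)
    also have "\<dots> = ennreal (M * m' + \<beta> * M * (2 - m'))"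
    proof -
      have m'0: "0 \<le> m'" by (simp add: m'_def)
      have e1: "ennreal M * ennreal m' = ennreal (M*m')" using M0 m'0 by (simp add: ennreal_mult)
      have e2: "ennreal (\<beta>*M) * ennreal (2-m') = ennreal (\<beta>*M*(2-m'))"
        using M0 \<beta> m'2 by (simp add: ennreal_mult)
      have e3: "ennreal (M*m') + ennreal (\<beta>*M*(2-m')) = ennreal (M*m' + \<beta>*M*(2-m'))"
        by (rule ennreal_plus[symmetric]) (use M0 m'0 \<beta> m'2 in auto)
      show ?thesis unfolding eE' eIE' e1 e2 by (rule e3)
    qed
    finally have "ennreal (M/4) \<le> ennreal (M * m' + \<beta> * M * (2 - m'))" by (rule order_trans[OF low])
    moreover have nn: "0 \<le> M * m' + \<beta> * M * (2 - m')"
      using M0 \<beta> m'2 by (intro add_nonneg_nonneg mult_nonneg_nonneg) (auto simp: m'_def)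
    ultimately have ineq: "M/4 \<le> M * m' + \<beta> * M * (2 - m')"
      using ennreal_le_iff[OF nn] by simp
    have ineq2: "1/4 \<le> m' + \<beta> * (2 - m')"
    proof -
      have "M * (1/4) \<le> M * (m' + \<beta> * (2 - m'))" using ineq by (simp add: algebra_simps)
      then show ?thesis using Mpos by simp
    qed
    have pm: "p_beta \<beta> \<le> m' / 2"
      using ineq2 \<beta> unfolding p_beta_def by (simp add: field_simps)
    have sub: "E' \<subseteq> I \<inter> E"
    proof
      fix y assume y: "y \<in> E'"
      then have yI: "y \<in> I" and Gy: "ennreal (\<beta> * M) \<le> G y" unfolding E'_def by auto
      define D where "D = {z. z \<in> I \<and> z \<notin> A \<and> z - y \<in> B}"
      have Dm[measurable]: "D \<in> sets borel" unfolding D_def I_def B_def by measurable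
      have "Pair y -` W = {w. y + w \<in> D}" using yI unfolding W_def D_def B_def I_def by (auto simp: algebra_simps)
      then have GD: "G y = emeasure lborel D" unfolding G_def using translate_emeasure[OF Dm] by simp
      have "ennreal (M + \<beta> * M) = ennreal M + ennreal (\<beta> * M)"
        using M0 \<beta> by (simp add: ennreal_plus)
      also have "\<dots> \<le> emeasure lborel B + emeasure lborel D" using eB Gy GD by (simp add: add_left_mono)
      also have "\<dots> = emeasure lborel (B \<union> D)"
      proof (rule plus_emeasure)
        show "B \<in> sets lborel" "D \<in> sets lborel" by simp_all
        show "B \<inter> D = {}" by (auto simp: D_def B_def)
      qed
      also have "\<dots> \<le> emeasure lborel ({z. z \<in> A \<or> z - y \<in> A} \<inter> I)"
        by (intro emeasure_mono) (auto simp: D_def B_def I_def)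
      also have "\<dots> = ennreal (F y)"
        using fin_I[of "{z. z \<in> A \<or> z - y \<in> A}"] unfolding F_def I_def by (simp add: emeasure_eq_ennreal_measure)
      finally have "ennreal (M + \<beta> * M) \<le> ennreal (F y)" .
      then have "M + \<beta> * M \<le> F y" using ennreal_le_iff[of "F y" "M + \<beta> * M"] by (simp add: F_def)
      then show "y \<in> I \<inter> E" using yI unfolding E_def by (simp add: algebra_simps)
    qed
    have "m' \<le> measure lborel (I \<inter> E)"
      unfolding m'_def by (rule measure_mono_fmeasurable[OF sub _ IE_fin]) simp
    then show ?thesis using pm unfolding E_def F_def M_def B_def I_def by simp
  qed
qed


lemma vfrac_eq:
  fixes S :: "real set"
  assumes "approx_ind eps t x = indicator S" and S[measurable]: "S \<in> sets borel"
  shows "vfrac eps t x = measure lborel (S \<inter> {-1..1}) / 2"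
proof -
  have "(\<integral>z\<in>{-1..1}. approx_ind eps t x z \<partial>lborel) = (\<integral>z. indicator (S \<inter> {-1..1}) z \<partial>lborel)"
    unfolding set_lebesgue_integral_def assms(1)
    by (intro Bochner_Integration.integral_cong) (auto simp: indicator_def)
  also have "\<dots> = measure lborel (S \<inter> {-1..1})"
    by simp
  finally show ?thesis unfolding vfrac_def by simp
qed

lemma approx_ind_t:
  "approx_ind eps t x = indicator {z. \<exists>S. S \<subseteq> {1..t} \<and> \<bar>z - (\<Sum>i\<in>S. x i)\<bar> < eps}"
  by (auto simp: approx_ind_def indicator_def fun_eq_iff)

lemma A_borel:
  "{z::real. \<exists>S. S \<subseteq> {1..t} \<and> \<bar>z - (\<Sum>i\<in>S. x i)\<bar> < eps} \<in> sets borel"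
proof -
  have eq: "{z::real. \<exists>S. S \<subseteq> {1..t} \<and> \<bar>z - (\<Sum>i\<in>S. x i)\<bar> < eps}
     = (\<Union>S\<in>Pow {1..t}. ball (\<Sum>i\<in>S. x i) eps)"
    by (auto simp: dist_real_def abs_minus_commute)
  show ?thesis unfolding eq by (intro borel_open open_UN) auto
qed

lemma approx_ind_Suc:
  "approx_ind eps (Suc t) (x(Suc t := y)) =
     indicator {z. z \<in> {z. \<exists>S. S \<subseteq> {1..t} \<and> \<bar>z - (\<Sum>i\<in>S. x i)\<bar> < eps}
                 \<or> z - y \<in> {z. \<exists>S. S \<subseteq> {1..t} \<and> \<bar>z - (\<Sum>i\<in>S. x i)\<bar> < eps}}"
proof -
  have "(\<exists>S. S \<subseteq> {1..Suc t} \<and> \<bar>z - (\<Sum>i\<in>S. (x(Suc t := y)) i)\<bar> < eps) \<longleftrightarrow>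
        (\<exists>S. S \<subseteq> {1..t} \<and> \<bar>z - (\<Sum>i\<in>S. x i)\<bar> < eps) \<or>
        (\<exists>S. S \<subseteq> {1..t} \<and> \<bar>(z - y) - (\<Sum>i\<in>S. x i)\<bar> < eps)" for z
  proof
    assume "\<exists>S. S \<subseteq> {1..Suc t} \<and> \<bar>z - (\<Sum>i\<in>S. (x(Suc t := y)) i)\<bar> < eps"
    then obtain S where S: "S \<subseteq> {1..Suc t}" "\<bar>z - (\<Sum>i\<in>S. (x(Suc t := y)) i)\<bar> < eps" by blast
    have fS: "finite S" using S(1) finite_subset by blast
    show "(\<exists>S. S \<subseteq> {1..t} \<and> \<bar>z - (\<Sum>i\<in>S. x i)\<bar> < eps) \<or>
        (\<exists>S. S \<subseteq> {1..t} \<and> \<bar>(z - y) - (\<Sum>i\<in>S. x i)\<bar> < eps)"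
    proof (cases "Suc t \<in> S")
      case True
      define S' where "S' = S - {Suc t}"
      have S'1: "S' \<subseteq> {1..t}" using S(1) unfolding S'_def by auto
      have "(\<Sum>i\<in>S. (x(Suc t := y)) i) = y + (\<Sum>i\<in>S'. (x(Suc t := y)) i)"
        unfolding S'_def using True fS by (simp add: sum.remove)
      also have "(\<Sum>i\<in>S'. (x(Suc t := y)) i) = (\<Sum>i\<in>S'. x i)"
        by (intro sum.cong) (auto simp: S'_def)
      finally have "\<bar>(z - y) - (\<Sum>i\<in>S'. x i)\<bar> < eps" using S(2) by (simp add: algebra_simps)
      then show ?thesis using S'1 by blast
    next
      case False
      then have S1: "S \<subseteq> {1..t}" using S(1) by (auto simp: le_Suc_eq)
      have "(\<Sum>i\<in>S. (x(Suc t := y)) i) = (\<Sum>i\<in>S. x i)"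
        using False by (intro sum.cong) auto
      then show ?thesis using S(2) S1 by auto
    qed
  next
    assume "(\<exists>S. S \<subseteq> {1..t} \<and> \<bar>z - (\<Sum>i\<in>S. x i)\<bar> < eps) \<or>
        (\<exists>S. S \<subseteq> {1..t} \<and> \<bar>(z - y) - (\<Sum>i\<in>S. x i)\<bar> < eps)"
    then show "\<exists>S. S \<subseteq> {1..Suc t} \<and> \<bar>z - (\<Sum>i\<in>S. (x(Suc t := y)) i)\<bar> < eps"
    proof
      assume "\<exists>S. S \<subseteq> {1..t} \<and> \<bar>z - (\<Sum>i\<in>S. x i)\<bar> < eps"
      then obtain S where S: "S \<subseteq> {1..t}" "\<bar>z - (\<Sum>i\<in>S. x i)\<bar> < eps" by blast
      have "(\<Sum>i\<in>S. (x(Suc t := y)) i) = (\<Sum>i\<in>S. x i)"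
        using S(1) by (intro sum.cong) auto
      moreover have "S \<subseteq> {1..Suc t}" using S(1) by auto
      ultimately show ?thesis using S(2) by metis
    next
      assume "\<exists>S. S \<subseteq> {1..t} \<and> \<bar>(z - y) - (\<Sum>i\<in>S. x i)\<bar> < eps"
      then obtain S where S: "S \<subseteq> {1..t}" "\<bar>(z - y) - (\<Sum>i\<in>S. x i)\<bar> < eps" by blast
      have fS: "finite S" using S(1) finite_subset by blast
      have nS: "Suc t \<notin> S" using S(1) by auto
      have "(\<Sum>i\<in>insert (Suc t) S. (x(Suc t := y)) i) = y + (\<Sum>i\<in>S. (x(Suc t := y)) i)"
        using fS nS by simp
      also have "(\<Sum>i\<in>S. (x(Suc t := y)) i) = (\<Sum>i\<in>S. x i)"
        using nS by (intro sum.cong) auto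
      finally have "\<bar>z - (\<Sum>i\<in>insert (Suc t) S. (x(Suc t := y)) i)\<bar> < eps"
        using S(2) by (simp add: algebra_simps)
      moreover have "insert (Suc t) S \<subseteq> {1..Suc t}" using S(1) by auto
      ultimately show ?thesis by blast
    qed
  qed
  then show ?thesis by (auto simp: approx_ind_def indicator_def fun_eq_iff)
qed

theorem lemma3:
  fixes eps \<beta> :: real and t :: nat and x :: "nat \<Rightarrow> real"
  assumes "eps > 0" and "0 < \<beta>" and "\<beta> < 1/8"
    and "\<forall>i\<in>{1..t}. x i \<in> {-1..1}"
    and "enat t < tau1 eps x"
  shows "prob_space.prob (uniform_measure lborel {-1..1::real})
           {y. vfrac eps (Suc t) (x(Suc t := y)) \<ge> vfrac eps t x * (1 + \<beta>)}
         \<ge> p_beta \<beta>"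
proof -
  define A where "A = {z::real. \<exists>S. S \<subseteq> {1..t} \<and> \<bar>z - (\<Sum>i\<in>S. x i)\<bar> < eps}"
  have Am[measurable]: "A \<in> sets borel" unfolding A_def by (rule A_borel)
  have vt: "vfrac eps t x = measure lborel (A \<inter> {-1..1}) / 2"
    by (rule vfrac_eq[OF _ Am]) (simp add: approx_ind_t A_def)
  have vS: "vfrac eps (Suc t) (x(Suc t := y)) = measure lborel ({z. z \<in> A \<or> z - y \<in> A} \<inter> {-1..1}) / 2" for y
  proof (rule vfrac_eq)
    show "approx_ind eps (Suc t) (x(Suc t := y)) = indicator {z. z \<in> A \<or> z - y \<in> A}"
      unfolding A_def by (rule approx_ind_Suc)
    show "{z. z \<in> A \<or> z - y \<in> A} \<in> sets borel" by measurable
  qed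
  have v_le: "\<not> vfrac eps t x > 1/2"
  proof (cases "\<exists>t. vfrac eps t x > 1/2")
    case True
    then have "t < (LEAST t. vfrac eps t x > 1/2)" using assms(5) unfolding tau1_def by simp
    then show ?thesis by (rule not_less_Least)
  next
    case False then show ?thesis by blast
  qed
  then have M1: "measure lborel (A \<inter> {-1..1}) \<le> 1" using vt by simp
  define E where "E = {y. measure lborel (A \<inter> {-1..1}) * (1+\<beta>)
            \<le> measure lborel ({z. z \<in> A \<or> z - y \<in> A} \<inter> {-1..1})}"
  have Em: "E \<in> sets borel" unfolding E_def by (rule F_meas[OF Am])
  have eqE: "{y. vfrac eps (Suc t) (x(Suc t := y)) \<ge> vfrac eps t x * (1 + \<beta>)} = E"
    unfolding E_def vt vS by auto
  have "measure (uniform_measure lborel {-1..1::real}) E = measure lborel ({-1..1} \<inter> E) / measure lborel {-1..1::real}"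
    using Em by (intro measure_uniform_measure) auto
  also have "\<dots> = measure lborel ({-1..1} \<inter> E) / 2" by simp
  finally have "measure (uniform_measure lborel {-1..1::real}) E = measure lborel ({-1..1} \<inter> E) / 2" .
  moreover have "p_beta \<beta> \<le> measure lborel ({-1..1} \<inter> E) / 2"
    unfolding E_def by (rule key[OF Am M1 assms(2,3)])
  ultimately show ?thesis unfolding eqE by simp
qed

end
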